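(* Let $\Bbbk$ be a field of characteristic $0$ and let $J$ be a special Jordan dialgebra such that $\bar J$ is a special Jordan algebra. Then $\widehat J=\bar J\oplus J$ is a special Jordan algebra.
   Context: An associative dialgebra is a vector space with bilinear $\vdash,\dashv$ satisfying $(x\dashv y)\vdash z=(x\vdash y)\vdash z$, $x\dashv(y\vdash z)=x\dashv(y\dashv z)$, $(x\vdash y)\vdash z=x\vdash(y\vdash z)$, $(x\dashv y)\dashv z=x\dashv(y\dashv z)$, $(x\vdash y)\dashv z=x\vdash(y\dashv z)$; $D^{(+)}$ is $D$ with $a\vdash_+b=\tfrac12(a\vdash b+b\dashv a)$, $a\dashv_+b=\tfrac12(a\dashv b+b\vdash a)$. A special Jordan dialgebra is a subdialgebra $J$ of some $D^{(+)}$. $\bar J=J/\mathrm{span}\{a\vdash_+b-a\dashv_+b\}$ is an ordinary algebra acting on $J$ by $\bar a\cdot v=a\vdash_+v$, $v\cdot\bar a=v\dashv_+a$; $\widehat J=\bar J\oplus J$ is the split null extension with product $(\bar a+m)(\bar b+n)=\bar a\bar b+(a\vdash_+n+m\dashv_+b)$. A Jordan algebra is special if it embeds into $A^{(+)}$ (product $\tfrac12(ab+ba)$) for an associative algebra $A$. *)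

theory Defs
  imports Main "HOL.Vector_Spaces"
begin

record ('k, 'v) kalg =
  acar   :: "'v set"
  aadd   :: "'v \<Rightarrow> 'v \<Rightarrow> 'v"
  azero  :: "'v"
  asmult :: "'k \<Rightarrow> 'v \<Rightarrow> 'v"
  amult  :: "'v \<Rightarrow> 'v \<Rightarrow> 'v"

definition k_algebra :: "('k::field, 'v) kalg \<Rightarrow> bool" where
  "k_algebra A \<longleftrightarrow>
     azero A \<in> acar A \<and>
     (\<forall>x\<in>acar A. \<forall>y\<in>acar A. aadd A x y \<in> acar A) \<and>
     (\<forall>c. \<forall>x\<in>acar A. asmult A c x \<in> acar A) \<and>
     (\<forall>x\<in>acar A. \<forall>y\<in>acar A. amult A x y \<in> acar A) \<and>
     (\<forall>x\<in>acar A. \<forall>y\<in>acar A. \<forall>z\<in>acar A. aadd A (aadd A x y) z = aadd A x (aadd A y z)) \<and>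
     (\<forall>x\<in>acar A. \<forall>y\<in>acar A. aadd A x y = aadd A y x) \<and>
     (\<forall>x\<in>acar A. aadd A (azero A) x = x) \<and>
     (\<forall>x\<in>acar A. \<exists>y\<in>acar A. aadd A x y = azero A) \<and>
     (\<forall>c. \<forall>x\<in>acar A. \<forall>y\<in>acar A. asmult A c (aadd A x y) = aadd A (asmult A c x) (asmult A c y)) \<and>
     (\<forall>c d. \<forall>x\<in>acar A. asmult A (c + d) x = aadd A (asmult A c x) (asmult A d x)) \<and>
     (\<forall>c d. \<forall>x\<in>acar A. asmult A c (asmult A d x) = asmult A (c * d) x) \<and>
     (\<forall>x\<in>acar A. asmult A 1 x = x) \<and>
     (\<forall>x\<in>acar A. \<forall>y\<in>acar A. \<forall>z\<in>acar A. amult A (aadd A x y) z = aadd A (amult A x z) (amult A y z)) \<and>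
     (\<forall>x\<in>acar A. \<forall>y\<in>acar A. \<forall>z\<in>acar A. amult A x (aadd A y z) = aadd A (amult A x y) (amult A x z)) \<and>
     (\<forall>c. \<forall>x\<in>acar A. \<forall>y\<in>acar A. amult A (asmult A c x) y = asmult A c (amult A x y)) \<and>
     (\<forall>c. \<forall>x\<in>acar A. \<forall>y\<in>acar A. amult A x (asmult A c y) = asmult A c (amult A x y))"

definition assoc_algebra :: "('k::field, 'v) kalg \<Rightarrow> bool" where
  "assoc_algebra A \<longleftrightarrow> k_algebra A \<and>
     (\<forall>x\<in>acar A. \<forall>y\<in>acar A. \<forall>z\<in>acar A. amult A (amult A x y) z = amult A x (amult A y z))"

definition plus_algebra :: "('k::field, 'v) kalg \<Rightarrow> ('k, 'v) kalg" where
  "plus_algebra A = A\<lparr>amult := (\<lambda>x y. asmult A (1/2) (aadd A (amult A x y) (amult A y x)))\<rparr>"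

definition alg_embedding :: "('k::field, 'v) kalg \<Rightarrow> ('k, 'w) kalg \<Rightarrow> ('v \<Rightarrow> 'w) \<Rightarrow> bool" where
  "alg_embedding A B f \<longleftrightarrow>
     f ` acar A \<subseteq> acar B \<and> inj_on f (acar A) \<and>
     (\<forall>x\<in>acar A. \<forall>y\<in>acar A. f (aadd A x y) = aadd B (f x) (f y)) \<and>
     (\<forall>c. \<forall>x\<in>acar A. f (asmult A c x) = asmult B c (f x)) \<and>
     (\<forall>x\<in>acar A. \<forall>y\<in>acar A. f (amult A x y) = amult B (f x) (f y))"

text \<open>A is a special Jordan algebra, with the enveloping associative algebra taken on
  a carrier inside the type 'u.\<close>
definition special_jordan_in :: "'u itself \<Rightarrow> ('k::field, 'v) kalg \<Rightarrow> bool" where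
  "special_jordan_in (U :: 'u itself) A \<longleftrightarrow> k_algebra A \<and>
     (\<exists>(B :: ('k, 'u) kalg) f. assoc_algebra B \<and> alg_embedding A (plus_algebra B) f)"

definition bilin :: "('k::field \<Rightarrow> 'd::ab_group_add \<Rightarrow> 'd) \<Rightarrow> ('d \<Rightarrow> 'd \<Rightarrow> 'd) \<Rightarrow> bool" where
  "bilin scale p \<longleftrightarrow>
     (\<forall>x y z. p (x + y) z = p x z + p y z) \<and> (\<forall>x y z. p x (y + z) = p x y + p x z) \<and>
     (\<forall>c x y. p (scale c x) y = scale c (p x y)) \<and> (\<forall>c x y. p x (scale c y) = scale c (p x y))"

text \<open>\<open>lv\<close> is \<open>\<turnstile>\<close>, \<open>rv\<close> is \<open>\<stileturn>\<close>; the dialgebra D is the whole type 'd.\<close>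
definition assoc_dialgebra ::
  "('k::field \<Rightarrow> 'd::ab_group_add \<Rightarrow> 'd) \<Rightarrow> ('d \<Rightarrow> 'd \<Rightarrow> 'd) \<Rightarrow> ('d \<Rightarrow> 'd \<Rightarrow> 'd) \<Rightarrow> bool" where
  "assoc_dialgebra scale lv rv \<longleftrightarrow> vector_space scale \<and> bilin scale lv \<and> bilin scale rv \<and>
     (\<forall>x y z. lv (rv x y) z = lv (lv x y) z) \<and>
     (\<forall>x y z. rv x (lv y z) = rv x (rv y z)) \<and>
     (\<forall>x y z. lv (lv x y) z = lv x (lv y z)) \<and>
     (\<forall>x y z. rv (rv x y) z = rv x (rv y z)) \<and>
     (\<forall>x y z. rv (lv x y) z = lv x (rv y z))"

definition lvp :: "('k::field \<Rightarrow> 'd::ab_group_add \<Rightarrow> 'd) \<Rightarrow> ('d \<Rightarrow> 'd \<Rightarrow> 'd) \<Rightarrow> ('d \<Rightarrow> 'd \<Rightarrow> 'd) \<Rightarrow> 'd \<Rightarrow> 'd \<Rightarrow> 'd" where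
  "lvp scale lv rv a b = scale (1/2) (lv a b + rv b a)"

definition rvp :: "('k::field \<Rightarrow> 'd::ab_group_add \<Rightarrow> 'd) \<Rightarrow> ('d \<Rightarrow> 'd \<Rightarrow> 'd) \<Rightarrow> ('d \<Rightarrow> 'd \<Rightarrow> 'd) \<Rightarrow> 'd \<Rightarrow> 'd \<Rightarrow> 'd" where
  "rvp scale lv rv a b = scale (1/2) (rv a b + lv b a)"

definition special_jordan_dialgebra ::
  "('k::field \<Rightarrow> 'd::ab_group_add \<Rightarrow> 'd) \<Rightarrow> ('d \<Rightarrow> 'd \<Rightarrow> 'd) \<Rightarrow> ('d \<Rightarrow> 'd \<Rightarrow> 'd) \<Rightarrow> 'd set \<Rightarrow> bool" where
  "special_jordan_dialgebra scale lv rv J \<longleftrightarrow> assoc_dialgebra scale lv rv \<and>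
     module.subspace scale J \<and>
     (\<forall>a\<in>J. \<forall>b\<in>J. lvp scale lv rv a b \<in> J \<and> rvp scale lv rv a b \<in> J)"

definition annI :: "('k::field \<Rightarrow> 'd::ab_group_add \<Rightarrow> 'd) \<Rightarrow> ('d \<Rightarrow> 'd \<Rightarrow> 'd) \<Rightarrow> ('d \<Rightarrow> 'd \<Rightarrow> 'd) \<Rightarrow> 'd set \<Rightarrow> 'd set" where
  "annI scale lv rv J = module.span scale
     {lvp scale lv rv a b - rvp scale lv rv a b | a b. a \<in> J \<and> b \<in> J}"

definition coset :: "'d::ab_group_add set \<Rightarrow> 'd \<Rightarrow> 'd set" where
  "coset I x = (\<lambda>i. x + i) ` I"

definition rep :: "'d set \<Rightarrow> 'd" where
  "rep X = (SOME x. x \<in> X)"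

definition Jbar :: "('k::field \<Rightarrow> 'd::ab_group_add \<Rightarrow> 'd) \<Rightarrow> ('d \<Rightarrow> 'd \<Rightarrow> 'd) \<Rightarrow> ('d \<Rightarrow> 'd \<Rightarrow> 'd) \<Rightarrow> 'd set
                    \<Rightarrow> ('k, 'd set) kalg" where
  "Jbar scale lv rv J = (let I = annI scale lv rv J in
     \<lparr> acar = coset I ` J,
       aadd = (\<lambda>X Y. coset I (rep X + rep Y)),
       azero = coset I 0,
       asmult = (\<lambda>c X. coset I (scale c (rep X))),
       amult = (\<lambda>X Y. coset I (lvp scale lv rv (rep X) (rep Y))) \<rparr>)"

text \<open>\<open>J hat = J bar \<oplus> J\<close>, elements written as pairs \<open>(a bar, m)\<close>, product
  \<open>(a bar + m)(b bar + n) = a bar b bar + (a \<turnstile>+ n + m \<stileturn>+ b)\<close>.\<close>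
definition Jhat :: "('k::field \<Rightarrow> 'd::ab_group_add \<Rightarrow> 'd) \<Rightarrow> ('d \<Rightarrow> 'd \<Rightarrow> 'd) \<Rightarrow> ('d \<Rightarrow> 'd \<Rightarrow> 'd) \<Rightarrow> 'd set
                    \<Rightarrow> ('k, 'd set \<times> 'd) kalg" where
  "Jhat scale lv rv J = (let B = Jbar scale lv rv J in
     \<lparr> acar = acar B \<times> J,
       aadd = (\<lambda>(X, m) (Y, n). (aadd B X Y, m + n)),
       azero = (azero B, 0),
       asmult = (\<lambda>c (X, m). (asmult B c X, scale c m)),
       amult = (\<lambda>(X, m) (Y, n). (amult B X Y,
                   lvp scale lv rv (rep X) n + rvp scale lv rv m (rep Y))) \<rparr>)"

end

theory Submission
  imports Defs
begin


lemma bilin_facts: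
  assumes v: "vector_space scale" and b: "bilin scale p"
  shows "p (x + y) z = p x z + p y z" "p x (y + z) = p x y + p x z"
    "p (scale c x) z = scale c (p x z)" "p x (scale c z) = scale c (p x z)"
    "p 0 z = 0" "p z 0 = 0" "p (- x) z = - p x z" "p z (- x) = - p z x"
    "p (x - y) z = p x z - p y z" "p z (x - y) = p z x - p z y"
proof -
  show a1: "\<And>x y z. p (x + y) z = p x z + p y z" and a2: "\<And>x y z. p x (y + z) = p x y + p x z"
    and "p (scale c x) z = scale c (p x z)" "p x (scale c z) = scale c (p x z)"
    using b by (auto simp: bilin_def)
  have z1: "\<And>z. p 0 z = 0" using a1[of 0 0] by simp
  have z2: "\<And>z. p z 0 = 0" using a2[of _ 0 0] by simp
  show "p 0 z = 0" "p z 0 = 0" by (rule z1, rule z2)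
  have n1: "\<And>x z. p (- x) z = - p x z" using a1[of _ "- _"] z1 by (metis add.right_inverse add_eq_0_iff)
  have n2: "\<And>x z. p z (- x) = - p z x" using a2[of _ _ "- _"] z2 by (metis add.right_inverse add_eq_0_iff)
  show "p (- x) z = - p x z" "p z (- x) = - p z x" by (rule n1, rule n2)
  show "p (x - y) z = p x z - p y z" using a1[of x "-y"] n1 by simp
  show "p z (x - y) = p z x - p z y" using a2[of z x "-y"] n2 by simp
qed

locale dia =
  fixes scale :: "'k::field \<Rightarrow> 'd::ab_group_add \<Rightarrow> 'd" and lv rv :: "'d \<Rightarrow> 'd \<Rightarrow> 'd"
  assumes AD: "assoc_dialgebra scale lv rv"
begin

lemma VS: "vector_space scale" using AD by (simp add: assoc_dialgebra_def)

sublocale vs: vector_space scale by (rule VS)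

lemma BL: "bilin scale lv" "bilin scale rv" using AD by (auto simp: assoc_dialgebra_def)

lemmas lvf = bilin_facts[OF VS BL(1)]
lemmas rvf = bilin_facts[OF VS BL(2)]

lemma ax1: "lv (rv x y) z = lv (lv x y) z"
  and ax2: "rv x (lv y z) = rv x (rv y z)"
  and ax3: "lv (lv x y) z = lv x (lv y z)"
  and ax4: "rv (rv x y) z = rv x (rv y z)"
  and ax5: "rv (lv x y) z = lv x (rv y z)"
  using AD by (auto simp: assoc_dialgebra_def)

end




lemma k_algebraI:
  assumes "azero A \<in> acar A"
    "\<And>x y. x\<in>acar A \<Longrightarrow> y\<in>acar A \<Longrightarrow> aadd A x y \<in> acar A"
    "\<And>c x. x\<in>acar A \<Longrightarrow> asmult A c x \<in> acar A"
    "\<And>x y. x\<in>acar A \<Longrightarrow> y\<in>acar A \<Longrightarrow> amult A x y \<in> acar A"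
    "\<And>x y z. x\<in>acar A \<Longrightarrow> y\<in>acar A \<Longrightarrow> z\<in>acar A \<Longrightarrow> aadd A (aadd A x y) z = aadd A x (aadd A y z)"
    "\<And>x y. x\<in>acar A \<Longrightarrow> y\<in>acar A \<Longrightarrow> aadd A x y = aadd A y x"
    "\<And>x. x\<in>acar A \<Longrightarrow> aadd A (azero A) x = x"
    "\<And>x. x\<in>acar A \<Longrightarrow> \<exists>y\<in>acar A. aadd A x y = azero A"
    "\<And>c x y. x\<in>acar A \<Longrightarrow> y\<in>acar A \<Longrightarrow> asmult A c (aadd A x y) = aadd A (asmult A c x) (asmult A c y)"
    "\<And>c d x. x\<in>acar A \<Longrightarrow> asmult A (c + d) x = aadd A (asmult A c x) (asmult A d x)"
    "\<And>c d x. x\<in>acar A \<Longrightarrow> asmult A c (asmult A d x) = asmult A (c * d) x"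
    "\<And>x. x\<in>acar A \<Longrightarrow> asmult A 1 x = x"
    "\<And>x y z. x\<in>acar A \<Longrightarrow> y\<in>acar A \<Longrightarrow> z\<in>acar A \<Longrightarrow> amult A (aadd A x y) z = aadd A (amult A x z) (amult A y z)"
    "\<And>x y z. x\<in>acar A \<Longrightarrow> y\<in>acar A \<Longrightarrow> z\<in>acar A \<Longrightarrow> amult A x (aadd A y z) = aadd A (amult A x y) (amult A x z)"
    "\<And>c x y. x\<in>acar A \<Longrightarrow> y\<in>acar A \<Longrightarrow> amult A (asmult A c x) y = asmult A c (amult A x y)"
    "\<And>c x y. x\<in>acar A \<Longrightarrow> y\<in>acar A \<Longrightarrow> amult A x (asmult A c y) = asmult A c (amult A x y)"
  shows "k_algebra A"
  unfolding k_algebra_def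
  apply (intro conjI ballI allI)
  using assms by simp_all

locale kalg =
  fixes A :: "('k::field, 'v) kalg"
  assumes KA: "k_algebra A"
begin
lemma zero_c: "azero A \<in> acar A"
  using KA unfolding k_algebra_def by simp
lemma add_c: "\<And>x y. x\<in>acar A \<Longrightarrow> y\<in>acar A \<Longrightarrow> aadd A x y \<in> acar A"
  using KA unfolding k_algebra_def by simp
lemma sm_c: "\<And>c x. x\<in>acar A \<Longrightarrow> asmult A c x \<in> acar A"
  using KA unfolding k_algebra_def by simp
lemma mul_c: "\<And>x y. x\<in>acar A \<Longrightarrow> y\<in>acar A \<Longrightarrow> amult A x y \<in> acar A"
  using KA unfolding k_algebra_def by simp
lemma add_assoc: "\<And>x y z. x\<in>acar A \<Longrightarrow> y\<in>acar A \<Longrightarrow> z\<in>acar A \<Longrightarrow> aadd A (aadd A x y) z = aadd A x (aadd A y z)"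
  using KA unfolding k_algebra_def by (elim conjE) blast
lemma add_comm: "\<And>x y. x\<in>acar A \<Longrightarrow> y\<in>acar A \<Longrightarrow> aadd A x y = aadd A y x"
  using KA unfolding k_algebra_def by simp
lemma zero_l: "\<And>x. x\<in>acar A \<Longrightarrow> aadd A (azero A) x = x"
  using KA unfolding k_algebra_def by (elim conjE) blast
lemma neg_ex: "\<And>x. x\<in>acar A \<Longrightarrow> \<exists>y\<in>acar A. aadd A x y = azero A"
  using KA unfolding k_algebra_def by simp
lemma sm_add: "\<And>c x y. x\<in>acar A \<Longrightarrow> y\<in>acar A \<Longrightarrow> asmult A c (aadd A x y) = aadd A (asmult A c x) (asmult A c y)"
  using KA unfolding k_algebra_def by simp
lemma add_sm: "\<And>c d x. x\<in>acar A \<Longrightarrow> asmult A (c + d) x = aadd A (asmult A c x) (asmult A d x)"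
  using KA unfolding k_algebra_def by simp
lemma sm_sm: "\<And>c d x. x\<in>acar A \<Longrightarrow> asmult A c (asmult A d x) = asmult A (c * d) x"
  using KA unfolding k_algebra_def by simp
lemma sm_one: "\<And>x. x\<in>acar A \<Longrightarrow> asmult A 1 x = x"
  using KA unfolding k_algebra_def by simp
lemma dist_r: "\<And>x y z. x\<in>acar A \<Longrightarrow> y\<in>acar A \<Longrightarrow> z\<in>acar A \<Longrightarrow> amult A (aadd A x y) z = aadd A (amult A x z) (amult A y z)"
  using KA unfolding k_algebra_def by simp
lemma dist_l: "\<And>x y z. x\<in>acar A \<Longrightarrow> y\<in>acar A \<Longrightarrow> z\<in>acar A \<Longrightarrow> amult A x (aadd A y z) = aadd A (amult A x y) (amult A x z)"
  using KA unfolding k_algebra_def by simp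
lemma sm_mul_l: "\<And>c x y. x\<in>acar A \<Longrightarrow> y\<in>acar A \<Longrightarrow> amult A (asmult A c x) y = asmult A c (amult A x y)"
  using KA unfolding k_algebra_def by simp
lemma sm_mul_r: "\<And>c x y. x\<in>acar A \<Longrightarrow> y\<in>acar A \<Longrightarrow> amult A x (asmult A c y) = asmult A c (amult A x y)"
  using KA unfolding k_algebra_def by simp

lemma zero_r: "x\<in>acar A \<Longrightarrow> aadd A x (azero A) = x"
  using add_comm zero_l zero_c by metis

lemma add_cancel_zero:
  assumes x: "x \<in> acar A" and e: "aadd A x x = x" shows "x = azero A"
proof -
  obtain y where y: "y \<in> acar A" "aadd A x y = azero A" using neg_ex[OF x] by blast
  have "x = aadd A x (aadd A x y)" using y zero_r x by simp
  also have "\<dots> = aadd A (aadd A x x) y" using add_assoc x y by simp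
  also have "\<dots> = azero A" using e y by simp
  finally show ?thesis .
qed

lemma sm_zero: "x \<in> acar A \<Longrightarrow> asmult A 0 x = azero A"
  by (rule add_cancel_zero) (auto simp: sm_c add_sm[symmetric])

lemma add_swap: "a\<in>acar A \<Longrightarrow> b\<in>acar A \<Longrightarrow> c\<in>acar A \<Longrightarrow> d\<in>acar A \<Longrightarrow>
  aadd A (aadd A a b) (aadd A c d) = aadd A (aadd A a c) (aadd A b d)"
  by (metis add_assoc add_comm add_c)

lemma neg_sm: "x \<in> acar A \<Longrightarrow> aadd A x (asmult A (-1) x) = azero A"
  using add_sm[of x 1 "-1"] sm_one sm_zero by simp

end

lemma assoc_algebraD: "assoc_algebra A \<Longrightarrow> kalg A"
  "assoc_algebra A \<Longrightarrow> x\<in>acar A \<Longrightarrow> y\<in>acar A \<Longrightarrow> z\<in>acar A \<Longrightarrow> amult A (amult A x y) z = amult A x (amult A y z)"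
  by (auto simp: assoc_algebra_def kalg_def)

lemma plus_algebra_simps[simp]:
  "acar (plus_algebra A) = acar A" "aadd (plus_algebra A) = aadd A" "azero (plus_algebra A) = azero A"
  "asmult (plus_algebra A) = asmult A"
  "amult (plus_algebra A) x y = asmult A (1/2) (aadd A (amult A x y) (amult A y x))"
  by (simp_all add: plus_algebra_def)

lemma emb_zero:
  assumes "k_algebra A" "k_algebra B" "alg_embedding A B f"
  shows "f (azero A) = azero B"
proof -
  interpret A: kalg A using assms by (simp add: kalg_def)
  interpret B: kalg B using assms by (simp add: kalg_def)
  have im: "f (azero A) \<in> acar B" using assms(3) A.zero_c by (auto simp: alg_embedding_def)
  have "aadd B (f (azero A)) (f (azero A)) = f (azero A)"
    using assms(3) A.zero_c A.zero_l[OF A.zero_c] unfolding alg_embedding_def by metis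
  then show ?thesis using B.add_cancel_zero im by blast
qed

lemma pullback:
  assumes K: "k_algebra B" and E: "alg_embedding A B f"
    and c0: "azero A \<in> acar A"
    and c1: "\<And>x y. x\<in>acar A \<Longrightarrow> y\<in>acar A \<Longrightarrow> aadd A x y \<in> acar A"
    and c2: "\<And>c x. x\<in>acar A \<Longrightarrow> asmult A c x \<in> acar A"
    and c3: "\<And>x y. x\<in>acar A \<Longrightarrow> y\<in>acar A \<Longrightarrow> amult A x y \<in> acar A"
    and f0: "f (azero A) = azero B"
  shows "k_algebra A"
proof -
  interpret B: kalg B using K by (simp add: kalg_def)
  have im: "\<And>x. x \<in> acar A \<Longrightarrow> f x \<in> acar B" and inj: "inj_on f (acar A)"
    and fa: "\<And>x y. x\<in>acar A \<Longrightarrow> y\<in>acar A \<Longrightarrow> f (aadd A x y) = aadd B (f x) (f y)"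
    and fs: "\<And>c x. x\<in>acar A \<Longrightarrow> f (asmult A c x) = asmult B c (f x)"
    and fm: "\<And>x y. x\<in>acar A \<Longrightarrow> y\<in>acar A \<Longrightarrow> f (amult A x y) = amult B (f x) (f y)"
    using E unfolding alg_embedding_def by blast+
  have eq: "\<And>x y. x\<in>acar A \<Longrightarrow> y\<in>acar A \<Longrightarrow> f x = f y \<Longrightarrow> x = y" using inj by (meson inj_onD)
  note S = c0 c1 c2 c3 fa fs fm im f0
  show ?thesis
  proof (rule k_algebraI)
    fix x assume x: "x \<in> acar A"
    show "\<exists>y\<in>acar A. aadd A x y = azero A"
      by (rule bexI[of _ "asmult A (-1) x"], rule eq) (simp_all add: x S B.neg_sm)
  next
    fix x y z assume xyz: "x \<in> acar A" "y \<in> acar A" "z \<in> acar A"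
    show "aadd A (aadd A x y) z = aadd A x (aadd A y z)"
      by (rule eq) (simp_all add: S B.add_assoc xyz)
    show "amult A (aadd A x y) z = aadd A (amult A x z) (amult A y z)"
      by (rule eq) (simp_all add: S B.dist_r xyz)
    show "amult A x (aadd A y z) = aadd A (amult A x y) (amult A x z)"
      by (rule eq) (simp_all add: S B.dist_l xyz)
  next
    fix x y assume xy: "x \<in> acar A" "y \<in> acar A"
    show "aadd A x y = aadd A y x"
      by (rule eq) (simp_all add: S xy B.add_comm)
  next
    fix x c d assume x: "x \<in> acar A"
    show "aadd A (azero A) x = x" by (rule eq) (simp_all add: S x B.zero_l)
    show "asmult A (c + d) x = aadd A (asmult A c x) (asmult A d x)" by (rule eq) (simp_all add: S x B.add_sm)
    show "asmult A c (asmult A d x) = asmult A (c * d) x" by (rule eq) (simp_all add: S x B.sm_sm)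
    show "asmult A 1 x = x" by (rule eq) (simp_all add: S x B.sm_one)
  next
    fix x y c assume xy: "x \<in> acar A" "y \<in> acar A"
    show "asmult A c (aadd A x y) = aadd A (asmult A c x) (asmult A c y)"
      by (rule eq) (simp_all add: S xy B.sm_add)
    show "amult A (asmult A c x) y = asmult A c (amult A x y)"
      by (rule eq) (simp_all add: S xy B.sm_mul_l)
    show "amult A x (asmult A c y) = asmult A c (amult A x y)"
      by (rule eq) (simp_all add: S xy B.sm_mul_r)
  qed (simp_all add: S)
qed


lemma plus_k_algebra: assumes "k_algebra A" shows "k_algebra (plus_algebra A)"
proof -
  interpret kalg A using assms by (simp add: kalg_def)
  note C = zero_c add_c sm_c mul_c
  show ?thesis
  proof (rule k_algebraI)
    fix x y z assume x: "x \<in> acar (plus_algebra A)" and y: "y \<in> acar (plus_algebra A)" and z: "z \<in> acar (plus_algebra A)"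
    then have x: "x \<in> acar A" and y: "y \<in> acar A" and z: "z \<in> acar A" by auto
    show "amult (plus_algebra A) (aadd (plus_algebra A) x y) z =
      aadd (plus_algebra A) (amult (plus_algebra A) x z) (amult (plus_algebra A) y z)"
      using x y z by (simp add: dist_r dist_l C add_swap sm_add[symmetric])
    show "amult (plus_algebra A) x (aadd (plus_algebra A) y z) =
      aadd (plus_algebra A) (amult (plus_algebra A) x y) (amult (plus_algebra A) x z)"
      using x y z by (simp add: dist_r dist_l C add_swap sm_add[symmetric])
  next
    fix x y c assume x: "x \<in> acar (plus_algebra A)" and y: "y \<in> acar (plus_algebra A)"
    then have x: "x \<in> acar A" and y: "y \<in> acar A" by auto
    show "amult (plus_algebra A) (asmult (plus_algebra A) c x) y = asmult (plus_algebra A) c (amult (plus_algebra A) x y)"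
      using x y by (simp add: sm_mul_l sm_mul_r C sm_add[symmetric] sm_sm mult.commute)
    show "amult (plus_algebra A) x (asmult (plus_algebra A) c y) = asmult (plus_algebra A) c (amult (plus_algebra A) x y)"
      using x y by (simp add: sm_mul_l sm_mul_r C sm_add[symmetric] sm_sm mult.commute)
  qed (auto simp: zero_c add_c sm_c mul_c add_assoc zero_l neg_ex sm_add add_sm sm_sm sm_one intro: add_comm)
qed




definition tr :: "('k::field, 'u) kalg \<Rightarrow> 'u set \<Rightarrow> ('u \<Rightarrow> 'w) \<Rightarrow> ('k, 'w) kalg" where
  "tr B C g = \<lparr> acar = g ` C,
     aadd = (\<lambda>x y. g (aadd B (the_inv_into C g x) (the_inv_into C g y))),
     azero = g (azero B),
     asmult = (\<lambda>c x. g (asmult B c (the_inv_into C g x))),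
     amult = (\<lambda>x y. g (amult B (the_inv_into C g x) (the_inv_into C g y))) \<rparr>"

lemma transport:
  fixes B :: "('k::field, 'u) kalg" and g :: "'u \<Rightarrow> 'w" and A :: "('k, 'v) kalg"
  assumes AB: "assoc_algebra B" and E: "alg_embedding A (plus_algebra B) f"
    and CB: "C \<subseteq> acar B" and c0: "azero B \<in> C"
    and c1: "\<And>x y. x\<in>C \<Longrightarrow> y\<in>C \<Longrightarrow> aadd B x y \<in> C"
    and c2: "\<And>c x. x\<in>C \<Longrightarrow> asmult B c x \<in> C"
    and c3: "\<And>x y. x\<in>C \<Longrightarrow> y\<in>C \<Longrightarrow> amult B x y \<in> C"
    and fC: "f ` acar A \<subseteq> C" and inj: "inj_on g C"
  shows "assoc_algebra (tr B C g) \<and> alg_embedding A (plus_algebra (tr B C g)) (g \<circ> f)"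
proof -
  interpret B: kalg B using assoc_algebraD(1)[OF AB] .
  have hg[simp]: "\<And>x. x \<in> C \<Longrightarrow> the_inv_into C g (g x) = x" using inj by (simp add: the_inv_into_f_f)
  have inB[simp]: "\<And>x. x \<in> C \<Longrightarrow> x \<in> acar B" using CB by blast
  note S = c0 c1 c2 c3 B.add_assoc B.zero_l B.sm_add B.add_sm B.sm_sm B.sm_one B.dist_r B.dist_l
    B.sm_mul_l B.sm_mul_r assoc_algebraD(2)[OF AB]
  have K: "k_algebra (tr B C g)"
  proof (rule k_algebraI)
    fix x assume "x \<in> acar (tr B C g)"
    then obtain x0 where x0: "x0 \<in> C" "x = g x0" by (auto simp: tr_def)
    show "\<exists>y\<in>acar (tr B C g). aadd (tr B C g) x y = azero (tr B C g)"
      by (rule bexI[of _ "g (asmult B (-1) x0)"]) (simp_all add: tr_def x0 c2 B.neg_sm)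
  next
    fix x y assume "x \<in> acar (tr B C g)" "y \<in> acar (tr B C g)"
    then obtain x0 y0 where "x0 \<in> C" "x = g x0" "y0 \<in> C" "y = g y0" by (auto simp: tr_def)
    then show "aadd (tr B C g) x y = aadd (tr B C g) y x"
      by (simp add: tr_def B.add_comm)
  qed (auto simp: tr_def S)
  have A: "assoc_algebra (tr B C g)"
    unfolding assoc_algebra_def using K by (auto simp: tr_def S)
  have im: "\<And>x. x \<in> acar A \<Longrightarrow> f x \<in> C" using fC by blast
  have Ef: "f ` acar A \<subseteq> acar B \<and> inj_on f (acar A) \<and>
     (\<forall>x\<in>acar A. \<forall>y\<in>acar A. f (aadd A x y) = aadd B (f x) (f y)) \<and>
     (\<forall>c. \<forall>x\<in>acar A. f (asmult A c x) = asmult B c (f x)) \<and>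
     (\<forall>x\<in>acar A. \<forall>y\<in>acar A. f (amult A x y) = asmult B (1/2) (aadd B (amult B (f x) (f y)) (amult B (f y) (f x))))"
    using E by (simp add: alg_embedding_def)
  have "inj_on (g \<circ> f) (acar A)"
    using Ef inj by (meson comp_inj_on fC inj_on_subset)
  then have "alg_embedding A (plus_algebra (tr B C g)) (g \<circ> f)"
    using Ef unfolding alg_embedding_def by (auto simp: tr_def im S)
  with A show ?thesis by blast
qed




definition prodA :: "('k::field, 'u) kalg \<Rightarrow> ('k, 'w) kalg \<Rightarrow> ('k, 'u \<times> 'w) kalg" where
  "prodA A1 A2 = \<lparr> acar = acar A1 \<times> acar A2,
     aadd = (\<lambda>x y. (aadd A1 (fst x) (fst y), aadd A2 (snd x) (snd y))),
     azero = (azero A1, azero A2),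
     asmult = (\<lambda>c x. (asmult A1 c (fst x), asmult A2 c (snd x))),
     amult = (\<lambda>x y. (amult A1 (fst x) (fst y), amult A2 (snd x) (snd y))) \<rparr>"

lemma prodA_assoc:
  assumes "assoc_algebra A1" "assoc_algebra A2"
  shows "assoc_algebra (prodA A1 A2)"
proof -
  interpret A1: kalg A1 using assoc_algebraD(1)[OF assms(1)] .
  interpret A2: kalg A2 using assoc_algebraD(1)[OF assms(2)] .
  have K: "k_algebra (prodA A1 A2)"
  proof (rule k_algebraI)
    fix x assume "x \<in> acar (prodA A1 A2)"
    then have x: "fst x \<in> acar A1" "snd x \<in> acar A2" by (auto simp: prodA_def)
    show "\<exists>y\<in>acar (prodA A1 A2). aadd (prodA A1 A2) x y = azero (prodA A1 A2)"
      by (rule bexI[of _ "(asmult A1 (-1) (fst x), asmult A2 (-1) (snd x))"])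
        (simp_all add: prodA_def x A1.sm_c A2.sm_c A1.neg_sm A2.neg_sm)
  next
    fix x y assume "x \<in> acar (prodA A1 A2)" "y \<in> acar (prodA A1 A2)"
    then show "aadd (prodA A1 A2) x y = aadd (prodA A1 A2) y x"
      by (auto simp: prodA_def intro: A1.add_comm A2.add_comm)
  qed (auto simp: prodA_def A1.zero_c A1.add_c A1.sm_c A1.mul_c A1.add_assoc A1.zero_l A1.sm_add A1.add_sm
      A1.sm_sm A1.sm_one A1.dist_r A1.dist_l A1.sm_mul_l A1.sm_mul_r
      A2.zero_c A2.add_c A2.sm_c A2.mul_c A2.add_assoc A2.zero_l A2.sm_add A2.add_sm
      A2.sm_sm A2.sm_one A2.dist_r A2.dist_l A2.sm_mul_l A2.sm_mul_r)
  show ?thesis unfolding assoc_algebra_def using K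
    by (auto simp: prodA_def assoc_algebraD(2)[OF assms(1)] assoc_algebraD(2)[OF assms(2)])
qed

datatype ('v, 'k) tm = Gen 'v | Add "('v, 'k) tm" "('v, 'k) tm" | Zero | Sm 'k "('v, 'k) tm"
  | Mul "('v, 'k) tm" "('v, 'k) tm"

primrec gens :: "('v, 'k) tm \<Rightarrow> 'v set" where
  "gens (Gen v) = {v}" | "gens (Add s t) = gens s \<union> gens t" | "gens Zero = {}"
| "gens (Sm c t) = gens t" | "gens (Mul s t) = gens s \<union> gens t"

primrec tev :: "('k, 'u) kalg \<Rightarrow> ('v \<Rightarrow> 'u) \<Rightarrow> ('v, 'k) tm \<Rightarrow> 'u" where
  "tev B p (Gen v) = p v" | "tev B p (Add s t) = aadd B (tev B p s) (tev B p t)"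
| "tev B p Zero = azero B" | "tev B p (Sm c t) = asmult B c (tev B p t)"
| "tev B p (Mul s t) = amult B (tev B p s) (tev B p t)"

primrec enc :: "'v \<Rightarrow> 'v \<Rightarrow> ('v, 'k::semiring_1) tm \<Rightarrow> 'v list \<Rightarrow> 'k" where
  "enc v0 v1 (Gen v) = (\<lambda>w. case w of [] \<Rightarrow> 0 | x # w' \<Rightarrow> if x = v then 1 else 0)"
| "enc v0 v1 (Add s t) = (\<lambda>w. case w of [] \<Rightarrow> 1 | x # w' \<Rightarrow>
      if x = v0 then enc v0 v1 s w' else if x = v1 then enc v0 v1 t w' else 0)"
| "enc v0 v1 Zero = (\<lambda>w. case w of [] \<Rightarrow> 2 | x # w' \<Rightarrow> 0)"
| "enc v0 v1 (Sm c t) = (\<lambda>w. case w of [] \<Rightarrow> 3 | x # w' \<Rightarrow>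
      if x = v0 then enc v0 v1 t w' else c)"
| "enc v0 v1 (Mul s t) = (\<lambda>w. case w of [] \<Rightarrow> 4 | x # w' \<Rightarrow>
      if x = v0 then enc v0 v1 s w' else if x = v1 then enc v0 v1 t w' else 0)"

lemma enc_inj:
  fixes t t' :: "('v, 'k::semiring_char_0) tm"
  assumes "v0 \<noteq> v1" shows "enc v0 v1 t = enc v0 v1 t' \<Longrightarrow> t = t'"
proof (induction t arbitrary: t')
  case (Gen v)
  then show ?case
  proof (cases t')
    case (Gen v')
    note tq = this
    have "v = v'" using fun_cong[OF Gen.prems[unfolded tq], of "[v]"] by (simp split: if_splits)
    then show ?thesis using tq by simp
  qed (auto dest!: fun_cong[where x="[]"])
next
  case (Add s t)
  then show ?case
  proof (cases t')
    case (Add s' t')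
    have "\<And>w. enc v0 v1 s w = enc v0 v1 s' w"
      using fun_cong[OF Add.prems, of "v0 # _"] Add by simp
    moreover have "\<And>w. enc v0 v1 t w = enc v0 v1 t' w"
      using fun_cong[OF Add.prems, of "v1 # _"] Add assms by simp
    ultimately show ?thesis using Add.IH Add by blast
  qed (auto dest!: fun_cong[where x="[]"])
next
  case Zero
  then show ?case by (cases t') (auto dest!: fun_cong[where x="[]"])
next
  case (Sm c t)
  then show ?case
  proof (cases t')
    case (Sm c' t')
    have "\<And>w. enc v0 v1 t w = enc v0 v1 t' w"
      using fun_cong[OF Sm.prems, of "v0 # _"] Sm by simp
    moreover have "c = c'"
      using fun_cong[OF Sm.prems, of "[v1]"] Sm assms by simp
    ultimately show ?thesis using Sm.IH Sm by blast
  qed (auto dest!: fun_cong[where x="[]"])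
next
  case (Mul s t)
  then show ?case
  proof (cases t')
    case (Mul s' t')
    have "\<And>w. enc v0 v1 s w = enc v0 v1 s' w"
      using fun_cong[OF Mul.prems, of "v0 # _"] Mul by simp
    moreover have "\<And>w. enc v0 v1 t w = enc v0 v1 t' w"
      using fun_cong[OF Mul.prems, of "v1 # _"] Mul assms by simp
    ultimately show ?thesis using Mul.IH Mul by blast
  qed (auto dest!: fun_cong[where x="[]"])
qed




lemma small_sub:
  fixes E :: "('k::field_char_0, 'u) kalg" and phi :: "'v \<Rightarrow> 'u" and A :: "('k, 'v) kalg"
  assumes AE: "assoc_algebra E" and EM: "alg_embedding A (plus_algebra E) phi" and v01: "(v0::'v) \<noteq> v1"
  shows "\<exists>(B::('k, 'v list \<Rightarrow> 'k) kalg) f. assoc_algebra B \<and> alg_embedding A (plus_algebra B) f"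
proof -
  interpret E: kalg E using assoc_algebraD(1)[OF AE] .
  let ?T = "{t. gens t \<subseteq> acar A}"
  define C where "C = tev E phi ` ?T"
  have phiA: "\<And>x. x \<in> acar A \<Longrightarrow> phi x \<in> acar E" using EM by (auto simp: alg_embedding_def)
  have inE: "gens t \<subseteq> acar A \<Longrightarrow> tev E phi t \<in> acar E" for t
    by (induction t) (auto simp: phiA E.zero_c E.add_c E.sm_c E.mul_c)
  have CB: "C \<subseteq> acar E" using inE by (auto simp: C_def)
  have c0: "azero E \<in> C" unfolding C_def by (rule image_eqI[of _ _ Zero]) auto
  have c1: "\<And>x y. x\<in>C \<Longrightarrow> y\<in>C \<Longrightarrow> aadd E x y \<in> C"
  proof -
    fix x y assume "x \<in> C" "y \<in> C"
    then obtain s t where "s \<in> ?T" "t \<in> ?T" "x = tev E phi s" "y = tev E phi t" by (auto simp: C_def)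
    then show "aadd E x y \<in> C" unfolding C_def by (intro image_eqI[of _ _ "Add s t"]) auto
  qed
  have c2: "\<And>c x. x\<in>C \<Longrightarrow> asmult E c x \<in> C"
  proof -
    fix c x assume "x \<in> C"
    then obtain t where "t \<in> ?T" "x = tev E phi t" by (auto simp: C_def)
    then show "asmult E c x \<in> C" unfolding C_def by (intro image_eqI[of _ _ "Sm c t"]) auto
  qed
  have c3: "\<And>x y. x\<in>C \<Longrightarrow> y\<in>C \<Longrightarrow> amult E x y \<in> C"
  proof -
    fix x y assume "x \<in> C" "y \<in> C"
    then obtain s t where "s \<in> ?T" "t \<in> ?T" "x = tev E phi s" "y = tev E phi t" by (auto simp: C_def)
    then show "amult E x y \<in> C" unfolding C_def by (intro image_eqI[of _ _ "Mul s t"]) auto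
  qed
  have fC: "phi ` acar A \<subseteq> C"
  proof
    fix y assume "y \<in> phi ` acar A"
    then obtain x where "x \<in> acar A" "y = phi x" by auto
    then show "y \<in> C" unfolding C_def by (intro image_eqI[of _ _ "Gen x"]) auto
  qed
  define g where "g c = enc v0 v1 (SOME t. t \<in> ?T \<and> tev E phi t = c)" for c
  have inj: "inj_on g C"
  proof (rule inj_onI)
    fix x y assume x: "x \<in> C" and y: "y \<in> C" and gxy: "g x = g y"
    have ex: "\<And>c. c \<in> C \<Longrightarrow> \<exists>t. t \<in> ?T \<and> tev E phi t = c" by (auto simp: C_def)
    let ?tx = "SOME t. t \<in> ?T \<and> tev E phi t = x" and ?ty = "SOME t. t \<in> ?T \<and> tev E phi t = y"
    have tx: "tev E phi ?tx = x" using someI_ex[OF ex[OF x]] by blast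
    have ty: "tev E phi ?ty = y" using someI_ex[OF ex[OF y]] by blast
    have "?tx = ?ty" using enc_inj[OF v01] gxy unfolding g_def by blast
    then show "x = y" using tx ty by simp
  qed
  show ?thesis using transport[OF AE EM CB c0 c1 c2 c3 fC inj] by blast
qed




definition E2 :: "('k::field \<Rightarrow> 'd::ab_group_add \<Rightarrow> 'd) \<Rightarrow> ('d \<Rightarrow> 'd \<Rightarrow> 'd) \<Rightarrow> ('d \<Rightarrow> 'd \<Rightarrow> 'd)
    \<Rightarrow> ('k, (('d \<Rightarrow> 'd) \<times> ('d \<Rightarrow> 'd)) \<times> 'd) kalg" where
  "E2 scale lv rv = \<lparr> acar = {p. \<exists>a b. fst (fst p) = lv a \<and> snd (fst p) = (\<lambda>z. rv z b)},
     aadd = (\<lambda>x y. ((\<lambda>z. fst (fst x) z + fst (fst y) z, \<lambda>z. snd (fst x) z + snd (fst y) z), snd x + snd y)),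
     azero = ((\<lambda>z. 0, \<lambda>z. 0), 0),
     asmult = (\<lambda>c x. ((\<lambda>z. scale c (fst (fst x) z), \<lambda>z. scale c (snd (fst x) z)), scale c (snd x))),
     amult = (\<lambda>x y. ((fst (fst x) \<circ> fst (fst y), snd (fst y) \<circ> snd (fst x)),
                     fst (fst x) (snd y) + snd (fst y) (snd x))) \<rparr>"

context dia
begin

lemma E2_mem: "p \<in> acar (E2 scale lv rv) \<longleftrightarrow> (\<exists>a b. fst (fst p) = lv a \<and> snd (fst p) = (\<lambda>z. rv z b))"
  by (simp add: E2_def)

lemma E2_assoc: "assoc_algebra (E2 scale lv rv)"
proof -
  let ?E = "E2 scale lv rv"
  have K: "k_algebra ?E"
  proof (rule k_algebraI)
    show "azero ?E \<in> acar ?E" unfolding E2_mem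
      by (rule exI[of _ 0], rule exI[of _ 0]) (simp add: E2_def fun_eq_iff lvf rvf)
  next
    fix x y assume "x \<in> acar ?E" "y \<in> acar ?E"
    then obtain a b a' b' where ab: "fst (fst x) = lv a" "snd (fst x) = (\<lambda>z. rv z b)"
      "fst (fst y) = lv a'" "snd (fst y) = (\<lambda>z. rv z b')" unfolding E2_mem by blast
    show "aadd ?E x y \<in> acar ?E" unfolding E2_mem
      by (rule exI[of _ "a + a'"], rule exI[of _ "b + b'"]) (simp add: E2_def fun_eq_iff lvf rvf ab)
    show "amult ?E x y \<in> acar ?E" unfolding E2_mem
      by (rule exI[of _ "lv a a'"], rule exI[of _ "rv b b'"]) (simp add: E2_def fun_eq_iff ab ax3 ax4)
    show "aadd ?E x y = aadd ?E y x" by (simp add: E2_def add.commute)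
  next
    fix c x assume "x \<in> acar ?E"
    then obtain a b where ab: "fst (fst x) = lv a" "snd (fst x) = (\<lambda>z. rv z b)" unfolding E2_mem by blast
    show "asmult ?E c x \<in> acar ?E" unfolding E2_mem
      by (rule exI[of _ "scale c a"], rule exI[of _ "scale c b"]) (simp add: E2_def fun_eq_iff lvf rvf ab)
    have m: "((lv (- a), \<lambda>z. rv z (- b)), - snd x) \<in> acar ?E" unfolding E2_mem by auto
    show "\<exists>y\<in>acar ?E. aadd ?E x y = azero ?E"
      by (rule bexI[OF _ m]) (simp add: E2_def fun_eq_iff lvf rvf ab)
  next
    fix x y z assume "x \<in> acar ?E" "y \<in> acar ?E" "z \<in> acar ?E"
    then obtain a b a' b' a'' b'' where ab: "fst (fst x) = lv a" "snd (fst x) = (\<lambda>z. rv z b)"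
      "fst (fst y) = lv a'" "snd (fst y) = (\<lambda>z. rv z b')"
      "fst (fst z) = lv a''" "snd (fst z) = (\<lambda>z. rv z b'')" unfolding E2_mem by blast
    show "aadd ?E (aadd ?E x y) z = aadd ?E x (aadd ?E y z)" by (simp add: E2_def add.assoc)
    show "amult ?E (aadd ?E x y) z = aadd ?E (amult ?E x z) (amult ?E y z)"
      by (simp add: E2_def ab fun_eq_iff lvf rvf add_ac)
    show "amult ?E x (aadd ?E y z) = aadd ?E (amult ?E x y) (amult ?E x z)"
      by (simp add: E2_def ab fun_eq_iff lvf rvf add_ac)
  next
    fix c x y assume "x \<in> acar ?E" "y \<in> acar ?E"
    then obtain a b a' b' where ab: "fst (fst x) = lv a" "snd (fst x) = (\<lambda>z. rv z b)"
      "fst (fst y) = lv a'" "snd (fst y) = (\<lambda>z. rv z b')" unfolding E2_mem by blast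
    show "asmult ?E c (aadd ?E x y) = aadd ?E (asmult ?E c x) (asmult ?E c y)"
      by (simp add: E2_def vs.scale_right_distrib)
    show "amult ?E (asmult ?E c x) y = asmult ?E c (amult ?E x y)"
      by (simp add: E2_def ab fun_eq_iff lvf rvf vs.scale_right_distrib)
    show "amult ?E x (asmult ?E c y) = asmult ?E c (amult ?E x y)"
      by (simp add: E2_def ab fun_eq_iff lvf rvf vs.scale_right_distrib)
  next
    fix c d x assume "x \<in> acar ?E"
    show "aadd ?E (azero ?E) x = x" by (simp add: E2_def)
    show "asmult ?E (c + d) x = aadd ?E (asmult ?E c x) (asmult ?E d x)"
      by (simp add: E2_def vs.scale_left_distrib)
    show "asmult ?E c (asmult ?E d x) = asmult ?E (c * d) x" by (simp add: E2_def)
    show "asmult ?E 1 x = x" by (simp add: E2_def)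
  qed
  have "\<And>x y z. x \<in> acar ?E \<Longrightarrow> y \<in> acar ?E \<Longrightarrow> z \<in> acar ?E \<Longrightarrow>
      amult ?E (amult ?E x y) z = amult ?E x (amult ?E y z)"
  proof -
    fix x y z assume "x \<in> acar ?E" "y \<in> acar ?E" "z \<in> acar ?E"
    then obtain a b a' b' a'' b'' where ab: "fst (fst x) = lv a" "snd (fst x) = (\<lambda>z. rv z b)"
      "fst (fst y) = lv a'" "snd (fst y) = (\<lambda>z. rv z b')"
      "fst (fst z) = lv a''" "snd (fst z) = (\<lambda>z. rv z b'')" unfolding E2_mem by blast
    show "amult ?E (amult ?E x y) z = amult ?E x (amult ?E y z)"
      by (simp add: E2_def ab lvf rvf ax5 add_ac comp_assoc)
  qed
  with K show ?thesis by (simp add: assoc_algebra_def)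
qed

end




context dia
begin

lemma E2_plus_mult:
  "amult (plus_algebra (E2 scale lv rv)) ((lv x, \<lambda>z. rv z x), m) ((lv y, \<lambda>z. rv z y), n) =
   ((lv (lvp scale lv rv x y), \<lambda>z. rv z (lvp scale lv rv x y)), lvp scale lv rv x n + rvp scale lv rv m y)"
  by (simp add: E2_def lvp_def rvp_def fun_eq_iff lvf rvf ax1 ax2 ax3 ax4 vs.scale_right_distrib add_ac)

lemma E2_add:
  "aadd (E2 scale lv rv) ((lv x, \<lambda>z. rv z x), m) ((lv y, \<lambda>z. rv z y), n) =
   ((lv (x + y), \<lambda>z. rv z (x + y)), m + n)"
  by (simp add: E2_def prodA_def fun_eq_iff lvf rvf)

lemma E2_sm:
  "asmult (E2 scale lv rv) c ((lv x, \<lambda>z. rv z x), m) = ((lv (scale c x), \<lambda>z. rv z (scale c x)), scale c m)"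
  by (simp add: E2_def prodA_def fun_eq_iff lvf rvf)

end

lemma prodA_plus_simps:
  "acar (plus_algebra (prodA A B)) = acar A \<times> acar B"
  "aadd (plus_algebra (prodA A B)) u v = (aadd A (fst u) (fst v), aadd B (snd u) (snd v))"
  "azero (plus_algebra (prodA A B)) = (azero A, azero B)"
  "asmult (plus_algebra (prodA A B)) c u = (asmult A c (fst u), asmult B c (snd u))"
  "amult (plus_algebra (prodA A B)) u v = (amult (plus_algebra A) (fst u) (fst v), amult (plus_algebra B) (snd u) (snd v))"
  by (simp_all add: prodA_def)

locale sjd = dia scale lv rv for scale :: "'k::field \<Rightarrow> 'd::ab_group_add \<Rightarrow> 'd" and lv rv +
  fixes J :: "'d set"
  assumes SJ: "special_jordan_dialgebra scale lv rv J"
begin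

abbreviation "I \<equiv> annI scale lv rv J"

lemma subJ: "vs.subspace J" using SJ by (simp add: special_jordan_dialgebra_def)
lemma lvpJ: "a \<in> J \<Longrightarrow> b \<in> J \<Longrightarrow> lvp scale lv rv a b \<in> J"
  and rvpJ: "a \<in> J \<Longrightarrow> b \<in> J \<Longrightarrow> rvp scale lv rv a b \<in> J"
  using SJ by (auto simp: special_jordan_dialgebra_def)

lemma J0: "0 \<in> J" and Jadd: "a \<in> J \<Longrightarrow> b \<in> J \<Longrightarrow> a + b \<in> J" and Jsc: "a \<in> J \<Longrightarrow> scale c a \<in> J"
  using subJ vs.subspace_0 vs.subspace_add vs.subspace_scale by blast+

lemma I_span: "I = vs.span {lvp scale lv rv a b - rvp scale lv rv a b | a b. a \<in> J \<and> b \<in> J}"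
  by (simp add: annI_def)

lemma I_sub: "I \<subseteq> J"
  unfolding I_span by (rule vs.span_minimal[OF _ subJ]) (auto intro!: vs.subspace_diff[OF subJ] lvpJ rvpJ)

lemma I0: "0 \<in> I" unfolding I_span by (rule vs.span_zero)

lemma I_ann: assumes "i \<in> I" shows "lv i z = 0" "rv z i = 0"
proof -
  let ?Z = "{i. \<forall>z. lv i z = 0 \<and> rv z i = 0}"
  have "vs.subspace ?Z" by (rule vs.subspaceI) (auto simp: lvf rvf)
  moreover have "{lvp scale lv rv a b - rvp scale lv rv a b | a b. a \<in> J \<and> b \<in> J} \<subseteq> ?Z"
    by (auto simp: lvp_def rvp_def lvf rvf ax1 ax2 vs.scale_right_distrib add_ac)
  ultimately have "I \<subseteq> ?Z" unfolding I_span by (rule vs.span_minimal[rotated])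
  then show "lv i z = 0" "rv z i = 0" using assms by auto
qed

lemma rep_coset: assumes "a \<in> J" shows "rep (coset I a) - a \<in> I"
proof -
  have "a \<in> coset I a" unfolding coset_def by (rule image_eqI[of _ _ 0]) (simp_all add: I0)
  then have "rep (coset I a) \<in> coset I a" unfolding rep_def by (rule someI)
  then show ?thesis unfolding coset_def by auto
qed

lemma rep_J: "a \<in> J \<Longrightarrow> rep (coset I a) \<in> J"
  using rep_coset I_sub Jadd by (metis add_diff_cancel subsetD diff_add_cancel)

lemma lv_rep: assumes "a \<in> J" shows "lv (rep (coset I a)) = lv a" "(\<lambda>z. rv z (rep (coset I a))) = (\<lambda>z. rv z a)"
proof -
  define i where "i = rep (coset I a) - a"
  have i: "i \<in> I" using rep_coset[OF assms] by (simp add: i_def)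
  have r: "rep (coset I a) = a + i" by (simp add: i_def)
  show "lv (rep (coset I a)) = lv a" "(\<lambda>z. rv z (rep (coset I a))) = (\<lambda>z. rv z a)"
    by (simp_all add: r fun_eq_iff lvf rvf I_ann[OF i])
qed

lemma Jbar_simps:
  "acar (Jbar scale lv rv J) = coset I ` J"
  "aadd (Jbar scale lv rv J) X Y = coset I (rep X + rep Y)"
  "azero (Jbar scale lv rv J) = coset I 0"
  "asmult (Jbar scale lv rv J) c X = coset I (scale c (rep X))"
  "amult (Jbar scale lv rv J) X Y = coset I (lvp scale lv rv (rep X) (rep Y))"
  by (simp_all add: Jbar_def Let_def)

lemma Jhat_simps:
  "acar (Jhat scale lv rv J) = acar (Jbar scale lv rv J) \<times> J"
  "aadd (Jhat scale lv rv J) (X, m) (Y, n) = (aadd (Jbar scale lv rv J) X Y, m + n)"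
  "azero (Jhat scale lv rv J) = (azero (Jbar scale lv rv J), 0)"
  "asmult (Jhat scale lv rv J) c (X, m) = (asmult (Jbar scale lv rv J) c X, scale c m)"
  "amult (Jhat scale lv rv J) (X, m) (Y, n) = (amult (Jbar scale lv rv J) X Y,
      lvp scale lv rv (rep X) n + rvp scale lv rv m (rep Y))"
  by (simp_all add: Jhat_def Let_def)

lemma repX_J: "X \<in> acar (Jbar scale lv rv J) \<Longrightarrow> rep X \<in> J"
  using rep_J by (auto simp: Jbar_simps)

lemma lv_repX: "a \<in> J \<Longrightarrow> lv (rep (coset I a)) = lv a"
  and rv_repX: "a \<in> J \<Longrightarrow> (\<lambda>z. rv z (rep (coset I a))) = (\<lambda>z. rv z a)"
  using lv_rep by blast+

definition phi :: "('d set \<Rightarrow> 'u) \<Rightarrow> 'd set \<times> 'd \<Rightarrow> 'u \<times> (('d \<Rightarrow> 'd) \<times> ('d \<Rightarrow> 'd)) \<times> 'd" where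
  "phi f p = (f (fst p), ((lv (rep (fst p)), \<lambda>z. rv z (rep (fst p))), snd p))"

lemma main_emb:
  fixes B :: "('k, 'u) kalg"
  assumes AB: "assoc_algebra B" and EB: "alg_embedding (Jbar scale lv rv J) (plus_algebra B) f"
    and KJ: "k_algebra (Jbar scale lv rv J)"
  shows "k_algebra (Jhat scale lv rv J) \<and>
    alg_embedding (Jhat scale lv rv J) (plus_algebra (prodA B (E2 scale lv rv))) (phi f)"
proof -
  let ?Jb = "Jbar scale lv rv J" and ?Jh = "Jhat scale lv rv J" and ?E = "prodA B (E2 scale lv rv)"
  have fim: "\<And>X. X \<in> acar ?Jb \<Longrightarrow> f X \<in> acar B" and finj: "inj_on f (acar ?Jb)"
    and fa: "\<And>X Y. X \<in> acar ?Jb \<Longrightarrow> Y \<in> acar ?Jb \<Longrightarrow> f (aadd ?Jb X Y) = aadd B (f X) (f Y)"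
    and fs: "\<And>c X. X \<in> acar ?Jb \<Longrightarrow> f (asmult ?Jb c X) = asmult B c (f X)"
    and fm: "\<And>X Y. X \<in> acar ?Jb \<Longrightarrow> Y \<in> acar ?Jb \<Longrightarrow> f (amult ?Jb X Y) = amult (plus_algebra B) (f X) (f Y)"
    using EB unfolding alg_embedding_def by auto
  have KB: "k_algebra (plus_algebra B)" using AB plus_k_algebra by (auto simp: assoc_algebra_def)
  have f0: "f (azero ?Jb) = azero B" using emb_zero[OF KJ KB EB] by simp
  have AE: "assoc_algebra ?E" by (rule prodA_assoc[OF AB E2_assoc])
  have KE: "k_algebra (plus_algebra ?E)" using AE plus_k_algebra by (auto simp: assoc_algebra_def)
  have cJb: "\<And>a. a \<in> J \<Longrightarrow> coset I a \<in> acar ?Jb" by (simp add: Jbar_simps)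
  have emb: "alg_embedding ?Jh (plus_algebra ?E) (phi f)"
    unfolding alg_embedding_def
  proof (intro conjI ballI allI)
    show "phi f ` acar ?Jh \<subseteq> acar (plus_algebra ?E)"
      by (auto simp: phi_def Jhat_simps prodA_def fim E2_mem)
    show "inj_on (phi f) (acar ?Jh)"
      by (auto simp: inj_on_def phi_def Jhat_simps dest: inj_onD[OF finj])
  next
    fix p q assume p: "p \<in> acar ?Jh" and q: "q \<in> acar ?Jh"
    obtain X m where pX: "p = (X, m)" "X \<in> acar ?Jb" "m \<in> J" using p by (cases p) (auto simp: Jhat_simps)
    obtain Y n where qY: "q = (Y, n)" "Y \<in> acar ?Jb" "n \<in> J" using q by (cases q) (auto simp: Jhat_simps)
    have x: "rep X \<in> J" and y: "rep Y \<in> J" using pX qY repX_J by auto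
    show "phi f (aadd ?Jh p q) = aadd (plus_algebra ?E) (phi f p) (phi f q)"
      using pX qY x y by (simp add: phi_def Jhat_simps prodA_plus_simps fa E2_add)
        (simp add: Jbar_simps lv_repX rv_repX Jadd prodA_def E2_add)
    show "phi f (amult ?Jh p q) = amult (plus_algebra ?E) (phi f p) (phi f q)"
      using pX qY x y by (simp add: phi_def Jhat_simps prodA_plus_simps fm E2_plus_mult del: plus_algebra_simps(5))
        (simp add: Jbar_simps lv_repX rv_repX lvpJ)
  next
    fix c p assume p: "p \<in> acar ?Jh"
    obtain X m where pX: "p = (X, m)" "X \<in> acar ?Jb" "m \<in> J" using p by (cases p) (auto simp: Jhat_simps)
    have x: "rep X \<in> J" using pX repX_J by auto
    show "phi f (asmult ?Jh c p) = asmult (plus_algebra ?E) c (phi f p)"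
      using pX x by (simp add: phi_def Jhat_simps prodA_plus_simps fs E2_sm)
        (simp add: Jbar_simps lv_repX rv_repX Jsc prodA_def E2_sm)
  qed
  have K: "k_algebra ?Jh"
  proof (rule pullback[OF KE emb])
    show "azero ?Jh \<in> acar ?Jh" using KJ by (simp add: Jhat_simps J0 k_algebra_def)
    show "\<And>x y. x \<in> acar ?Jh \<Longrightarrow> y \<in> acar ?Jh \<Longrightarrow> aadd ?Jh x y \<in> acar ?Jh"
      by (auto simp: Jhat_simps Jbar_simps Jadd rep_J)
    show "\<And>c x. x \<in> acar ?Jh \<Longrightarrow> asmult ?Jh c x \<in> acar ?Jh"
      by (auto simp: Jhat_simps Jbar_simps Jsc rep_J)
    show "\<And>x y. x \<in> acar ?Jh \<Longrightarrow> y \<in> acar ?Jh \<Longrightarrow> amult ?Jh x y \<in> acar ?Jh"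
      by (auto simp: Jhat_simps Jbar_simps Jadd lvpJ rvpJ rep_J)
    show "phi f (azero ?Jh) = azero (plus_algebra ?E)"
      using f0 by (simp add: phi_def Jhat_simps prodA_plus_simps)
        (simp add: Jbar_simps lv_repX[OF J0] rv_repX[OF J0] E2_def prodA_def fun_eq_iff lvf rvf)
  qed
  with emb show ?thesis by blast
qed

end



theorem mainTheorem19:
  fixes scale :: "'k::field_char_0 \<Rightarrow> 'd::ab_group_add \<Rightarrow> 'd"
    and lv rv :: "'d \<Rightarrow> 'd \<Rightarrow> 'd"
    and J :: "'d set"
  assumes "special_jordan_dialgebra scale lv rv J"
    and "special_jordan_in TYPE('a) (Jbar scale lv rv J)"
  shows "special_jordan_in TYPE(('d set \<times> 'd) list \<Rightarrow> 'k) (Jhat scale lv rv J)"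
proof -
  interpret S: sjd scale lv rv J
    by unfold_locales (use assms(1) in \<open>simp_all add: special_jordan_dialgebra_def\<close>)
  from assms(2) obtain B :: "('k, 'a) kalg" and f where KJ: "k_algebra (Jbar scale lv rv J)"
    and AB: "assoc_algebra B" and EB: "alg_embedding (Jbar scale lv rv J) (plus_algebra B) f"
    unfolding special_jordan_in_def by blast
  have M: "k_algebra (Jhat scale lv rv J) \<and>
    alg_embedding (Jhat scale lv rv J) (plus_algebra (prodA B (E2 scale lv rv))) (S.phi f)"
    by (rule S.main_emb[OF AB EB KJ])
  have AE: "assoc_algebra (prodA B (E2 scale lv rv))" by (rule prodA_assoc[OF AB S.E2_assoc])
  have v: "({}::'d set, 0::'d) \<noteq> (UNIV, 0)" by auto
  obtain B' :: "('k, ('d set \<times> 'd) list \<Rightarrow> 'k) kalg" and f' where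
    "assoc_algebra B'" "alg_embedding (Jhat scale lv rv J) (plus_algebra B') f'"
    using small_sub[OF AE conjunct2[OF M] v] by blast
  then show ?thesis using M unfolding special_jordan_in_def by blast
qed

end
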